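(* Let $k$ be a field of characteristic not $2$ or $3$, let $n\ge2$, let $\mathcal{A}\in k^{n+1}\otimes\operatorname{Sym}_2k^3$, and let $X=Z(\det\mathcal{A}(\mathbf{x},\cdot,\cdot))\subseteq\mathbb{P}^n$ be the associated symmetroid hypersurface of degree $3$. If the Cayley variety of $\mathcal{A}$ is non-empty, then $X$ contains a linear subspace of $\mathbb{P}^n$ of dimension at least $n-2$, along which $X$ is singular.
   Context: $\mathcal{A}$ is viewed as an $(n+1)$-tuple $(A_0,\dots,A_n)$ of symmetric $3\times3$ matrices, $\mathcal{A}(\mathbf{x},\cdot,\cdot)=\sum x_iA_i$, and the Cayley variety is $Z(\mathbf{y}^TA_0\mathbf{y},\dots,\mathbf{y}^TA_n\mathbf{y})\subseteq\mathbb{P}^2$. *)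

theory Defs
  imports "HOL-Analysis.Analysis" "HOL-Computational_Algebra.Polynomial"
begin

text \<open>The pencil A(x,.,.) = sum_i x_i A_i of symmetric 3x3 matrices, for x in k^(n+1)
  (the index type 'n has n+1 elements).\<close>
definition pencil :: "('n::finite \<Rightarrow> 'a::field^3^3) \<Rightarrow> 'a^'n \<Rightarrow> 'a^3^3" where
  "pencil A x = (\<chi> i j. \<Sum>k\<in>UNIV. x $ k * (A k $ i $ j))"

definition quad_form :: "'a::comm_ring_1^3^3 \<Rightarrow> 'a^3 \<Rightarrow> 'a" where
  "quad_form M y = (\<Sum>j\<in>UNIV. y $ j * (M *v y) $ j)"

definition cayley_nonempty :: "('n::finite \<Rightarrow> 'a::field^3^3) \<Rightarrow> bool" where
  "cayley_nonempty A \<longleftrightarrow> (\<exists>y::'a^3. y \<noteq> 0 \<and> (\<forall>i. quad_form (A i) y = 0))"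

definition symmetroid_eq :: "('n::finite \<Rightarrow> 'a::field^3^3) \<Rightarrow> 'a^'n \<Rightarrow> 'a" where
  "symmetroid_eq A x = det (pencil A x)"

text \<open>Directional derivative of f at x in direction v: the coefficient of t in the
  polynomial t \<mapsto> det A(x + t v) = det (A(x) + t A(v)) (formal derivative, valid over any field).\<close>
definition symmetroid_dir_deriv :: "('n::finite \<Rightarrow> 'a::field^3^3) \<Rightarrow> 'a^'n \<Rightarrow> 'a^'n \<Rightarrow> 'a" where
  "symmetroid_dir_deriv A x v =
     coeff (det (\<chi> i j. [: pencil A x $ i $ j, pencil A v $ i $ j :])) 1"

text \<open>x (a representative of a point of P^n) is a singular point of X = Z(f):
  f(x) = 0 and all partial derivatives of f vanish at x (equivalently all directional derivatives).\<close>
definition symmetroid_singular_at :: "('n::finite \<Rightarrow> 'a::field^3^3) \<Rightarrow> 'a^'n \<Rightarrow> bool" where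
  "symmetroid_singular_at A x \<longleftrightarrow>
     symmetroid_eq A x = 0 \<and> (\<forall>v. symmetroid_dir_deriv A x v = 0)"

end

theory Submission
  imports Defs
begin

definition "D3 a1 b1 a2 b2 a3 b3 = (b1*a2*a3 + a1*b2*a3 + a1*a2*(b3::'a::field))"

lemma keyD:
  fixes a b c d e f p q r s t u y1 y2 y3 :: "'a::field"
  assumes "a*y1+b*y2+c*y3=0" "b*y1+d*y2+e*y3=0" "c*y1+e*y2+f*y3=0"
   "y1*(p*y1+q*y2+r*y3)+y2*(q*y1+s*y2+t*y3)+y3*(r*y1+t*y2+u*y3) = 0"
   "y1 \<noteq> 0 \<or> y2 \<noteq> 0 \<or> y3 \<noteq> 0"
  shows "D3 a p d s f u + D3 b q e t c r + D3 c r b q e t - D3 a p e t e t - D3 b q b q f u - D3 c r d s c r = 0"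
proof -
  define P11 where "P11 = d*f-e*e"
  define P22 where "P22 = a*f-c*c"
  define P33 where "P33 = a*d-b*b"
  define P12 where "P12 = c*e-b*f"
  define P13 where "P13 = b*e-c*d"
  define P23 where "P23 = b*c-a*e"
  define DD where "DD = p*P11 + s*P22 + u*P33 + 2*q*P12 + 2*r*P13 + 2*t*P23"
  have E: "D3 a p d s f u + D3 b q e t c r + D3 c r b q e t - D3 a p e t e t - D3 b q b q f u - D3 c r d s c r
    = DD"
    unfolding D3_def DD_def P11_def P22_def P33_def P12_def P13_def P23_def by (simp add: algebra_simps)
  define Q where "Q = y1*(p*y1+q*y2+r*y3)+y2*(q*y1+s*y2+t*y3)+y3*(r*y1+t*y2+u*y3)"
  have Q0: "Q = 0" using assms(4) Q_def by simp
  have G: "\<And>z. z*DD = p*(z*P11) + s*(z*P22) + u*(z*P33) + 2*q*(z*P12) + 2*r*(z*P13) + 2*t*(z*P23)"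
    unfolding DD_def by (simp add: algebra_simps)
  have "y3*y3*DD = P33*Q"
  proof -
    have h: "y3*y3*P11 = P33*y1*y1"
      "y3*y3*P12 = P33*y1*y2"
      "y3*y3*P13 = P33*y1*y3"
      "y3*y3*P22 = P33*y2*y2"
      "y3*y3*P23 = P33*y2*y3"
      using assms(1-3) unfolding P11_def P22_def P33_def P12_def P13_def P23_def by algebra+
    show ?thesis unfolding G h Q_def by (simp add: algebra_simps)
  qed
  moreover have "y1*y1*DD = P11*Q"
  proof -
    have h: "y1*y1*P33 = P11*y3*y3"
      "y1*y1*P12 = P11*y1*y2"
      "y1*y1*P13 = P11*y1*y3"
      "y1*y1*P22 = P11*y2*y2"
      "y1*y1*P23 = P11*y2*y3"
      using assms(1-3) unfolding P11_def P22_def P33_def P12_def P13_def P23_def by algebra+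
    show ?thesis unfolding G h Q_def by (simp add: algebra_simps)
  qed
  moreover have "y2*y2*DD = P22*Q"
  proof -
    have h: "y2*y2*P33 = P22*y3*y3"
      "y2*y2*P12 = P22*y1*y2"
      "y2*y2*P13 = P22*y1*y3"
      "y2*y2*P11 = P22*y1*y1"
      "y2*y2*P23 = P22*y2*y3"
      using assms(1-3) unfolding P11_def P22_def P33_def P12_def P13_def P23_def by algebra+
    show ?thesis unfolding G h Q_def by (simp add: algebra_simps)
  qed
  ultimately have "DD = 0" using Q0 assms(5) by auto
  then show ?thesis using E by simp
qed

lemma coeff3: "coeff ([:a1,b1:]*[:a2,b2:]*[:a3,b3:]) 1 = D3 a1 b1 a2 b2 a3 (b3::'a::field)"
  by (simp add: D3_def algebra_simps)

lemma sum3: "(\<Sum>i\<in>(UNIV::3 set). f i) = f 1 + f 2 + f 3"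
  by (rule sum_3)

lemma detker: "(M::'a::field^3^3) *v y = 0 \<Longrightarrow> y \<noteq> 0 \<Longrightarrow> det M = 0"
  using inj_matrix_vector_mult invertible_det_nz vec.inj_iff_eq_0 by blast

lemma coeff_det:
  fixes M N :: "'a::field^3^3"
  shows "coeff (det (\<chi> i j. [:M$i$j, N$i$j:])) 1 =
    D3 (M$1$1) (N$1$1) (M$2$2) (N$2$2) (M$3$3) (N$3$3) + D3 (M$1$2) (N$1$2) (M$2$3) (N$2$3) (M$3$1) (N$3$1)
  + D3 (M$1$3) (N$1$3) (M$2$1) (N$2$1) (M$3$2) (N$3$2) - D3 (M$1$1) (N$1$1) (M$2$3) (N$2$3) (M$3$2) (N$3$2)
  - D3 (M$1$2) (N$1$2) (M$2$1) (N$2$1) (M$3$3) (N$3$3) - D3 (M$1$3) (N$1$3) (M$2$2) (N$2$2) (M$3$1) (N$3$1)"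
  unfolding det_3 vec_lambda_beta coeff_add coeff_diff coeff3 by (rule refl)

lemma nonzero3: "(y::'a::field^3) \<noteq> 0 \<Longrightarrow> y$1 \<noteq> 0 \<or> y$2 \<noteq> 0 \<or> y$3 \<noteq> 0"
  by (metis exhaust_3 vec_eq_iff zero_index)

lemma keyM:
  fixes M N :: "'a::field^3^3"
  assumes "M *v y = 0" "y \<noteq> 0" "\<forall>i j. M$i$j = M$j$i" "\<forall>i j. N$i$j = N$j$i" "quad_form N y = 0"
  shows "coeff (det (\<chi> i j. [:M$i$j, N$i$j:])) 1 = 0"
proof -
  have s: "M$2$1 = M$1$2" "M$3$1 = M$1$3" "M$3$2 = M$2$3"
          "N$2$1 = N$1$2" "N$3$1 = N$1$3" "N$3$2 = N$2$3" using assms(3,4) by auto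
  have u: "(M *v y)$1 = 0" "(M *v y)$2 = 0" "(M *v y)$3 = 0" using assms(1) by auto
  have u1: "M$1$1*y$1 + M$1$2*y$2 + M$1$3*y$3 = 0"
    using u(1) by (simp add: matrix_vector_mult_def sum3)
  have u2: "M$1$2*y$1 + M$2$2*y$2 + M$2$3*y$3 = 0"
    using u(2) by (simp add: matrix_vector_mult_def sum3 s)
  have u3: "M$1$3*y$1 + M$2$3*y$2 + M$3$3*y$3 = 0"
    using u(3) by (simp add: matrix_vector_mult_def sum3 s)
  have q: "y$1*(N$1$1*y$1+N$1$2*y$2+N$1$3*y$3)+y$2*(N$1$2*y$1+N$2$2*y$2+N$2$3*y$3)
          +y$3*(N$1$3*y$1+N$2$3*y$2+N$3$3*y$3) = 0"
    using assms(5) by (simp add: quad_form_def matrix_vector_mult_def sum3 s)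
  show ?thesis unfolding coeff_det s
    by (rule keyD[OF u1 u2 u3 q nonzero3[OF assms(2)]])
qed


lemma hyper:
  fixes g :: "'a::field^'n \<Rightarrow> 'a"
  assumes S: "vec.subspace S" and ga: "\<And>x z. g (x+z) = g x + g z" and gs: "\<And>c x. g (c *s x) = c * g x"
  shows "vec.dim S \<le> vec.dim (S \<inter> {x. g x = 0}) + 1"
proof (cases "\<forall>x\<in>S. g x = 0")
  case True
  then have "S \<inter> {x. g x = 0} = S" by auto
  then show ?thesis by simp
next
  case False
  then obtain w where w: "w \<in> S" "g w \<noteq> 0" by auto
  define B where "B = S \<inter> {x. g x = 0}"
  have "S \<subseteq> vec.span (insert w B)"
  proof
    fix x assume x: "x \<in> S"
    define c where "c = g x / g w"
    have xe: "x = (x + (- c) *s w) + c *s w" by (simp add: vec_eq_iff)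
    have "x + (- c) *s w \<in> S" using S x w by (simp add: vec.subspace_diff vec.subspace_scale)
    moreover have "g (x + (- c) *s w) = 0"
    proof -
      have "g (x + (- c) *s w) = g x + (- c) * g w" by (simp only: ga gs)
      then show ?thesis using w by (simp add: c_def)
    qed
    ultimately have "x + (- c) *s w \<in> B" unfolding B_def by simp
    then have "x + (- c) *s w \<in> vec.span (insert w B)" by (simp add: vec.span_base)
    moreover have "c *s w \<in> vec.span (insert w B)" by (simp add: vec.span_base vec.span_scale)
    ultimately show "x \<in> vec.span (insert w B)" using xe vec.span_add by metis
  qed
  then have "vec.dim S \<le> vec.dim (vec.span (insert w B))" by (rule vec.dim_subset)
  also have "\<dots> = vec.dim (insert w B)" by simp
  also have "\<dots> \<le> vec.dim B + 1" by (simp add: vec.dim_insert)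
  finally show ?thesis unfolding B_def .
qed

lemma sym_pencil:
  assumes "\<forall>i. transpose (A i) = A i"
  shows "\<forall>i j. pencil A x $ i $ j = pencil A x $ j $ i"
proof (intro allI)
  fix i j
  have "A k $ i $ j = A k $ j $ i" for k
  proof -
    have "transpose (A k) $ i $ j = A k $ i $ j" using assms by simp
    moreover have "transpose (A k) $ i $ j = A k $ j $ i" by (simp add: transpose_def)
    ultimately show ?thesis by simp
  qed
  then show "pencil A x $ i $ j = pencil A x $ j $ i" by (simp add: pencil_def)
qed

lemma pencil_mv: "(pencil A x *v y) $ l = (\<Sum>k\<in>UNIV. x $ k * (A k *v y) $ l)"
  apply (simp add: pencil_def matrix_vector_mult_def sum_distrib_left sum_distrib_right)
  apply (rule trans[OF sum.swap])
  apply (simp add: mult.assoc)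
  done

lemma quad_pencil: "quad_form (pencil A v) y = (\<Sum>k\<in>UNIV. v $ k * quad_form (A k) y)"
  unfolding quad_form_def pencil_mv
  apply (simp add: sum_distrib_left sum_distrib_right)
  apply (rule trans[OF sum.swap])
  apply (simp add: mult.left_commute)
  done

theorem lemma4p0p8:
  fixes A :: "'n::finite \<Rightarrow> 'a::field^3^3"
  assumes "CARD('n) \<ge> 3"
    and "CHAR('a) \<noteq> 2" and "CHAR('a) \<noteq> 3"
    and "\<forall>i. transpose (A i) = A i"
    and "cayley_nonempty A"
  shows "\<exists>L. vec.subspace L \<and> CARD('n) \<le> vec.dim L + 2 \<and>
             (\<forall>x\<in>L. symmetroid_eq A x = 0 \<and> symmetroid_singular_at A x)"
proof -
  obtain y :: "'a^3" where y0: "y \<noteq> 0" and yq: "\<forall>i. quad_form (A i) y = 0"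
    using assms(5) unfolding cayley_nonempty_def by blast
  have qz: "quad_form (pencil A v) y = 0" for v
    unfolding quad_pencil using yq by simp
  define f where "f x = pencil A x *v y" for x
  have fl: "f x $ l = (\<Sum>k\<in>UNIV. x $ k * (A k *v y) $ l)" for x l
    unfolding f_def by (rule pencil_mv)
  have fa: "f (x + z) $ l = f x $ l + f z $ l" for x z l
    unfolding fl by (simp add: distrib_right sum.distrib)
  have fs: "f (c *s x) $ l = c * f x $ l" for c x l
    unfolding fl by (simp add: sum_distrib_left mult.assoc)
  define K where "K l = {x. f x $ l = 0}" for l
  have Ksub: "vec.subspace (K l)" for l
  proof -
    have "f 0 $ l = 0" using fs[of 0 0 l] by simp
    then show ?thesis unfolding vec.subspace_def K_def by (simp add: fa fs)
  qed
  have dimK: "CARD('n) \<le> vec.dim (K l) + 1" for l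
  proof -
    have c: "vec.dim (UNIV::('a^'n) set) = CARD('n)" by (rule vec_dim_card)
    have "vec.dim (UNIV::('a^'n) set) \<le> vec.dim (UNIV \<inter> {x. f x $ l = 0}) + 1"
      by (rule hyper[OF vec.subspace_UNIV]) (simp_all add: fa fs)
    then show ?thesis unfolding c K_def by simp
  qed
  have dimKK: "CARD('n) \<le> vec.dim (K i \<inter> K j) + 2" for i j
  proof -
    have "vec.dim (K i) \<le> vec.dim (K i \<inter> {x. f x $ j = 0}) + 1"
      by (rule hyper[OF Ksub[of i]]) (simp_all add: fa fs)
    moreover have "K i \<inter> {x. f x $ j = 0} = K i \<inter> K j" unfolding K_def by simp
    ultimately show ?thesis using dimK[of i] by simp
  qed
  obtain k where yk: "y $ k \<noteq> 0" using y0 by (auto simp: vec_eq_iff)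
  obtain i j :: 3 where ij: "i \<noteq> k" "j \<noteq> k" "i \<noteq> j"
  proof -
    have "k = 1 \<or> k = 2 \<or> k = 3" by (rule exhaust_3)
    then show ?thesis
    proof (elim disjE)
      assume "k=1" then show ?thesis using that[of 2 3] by simp
    next
      assume "k=2" then show ?thesis using that[of 1 3] by simp
    next
      assume "k=3" then show ?thesis using that[of 1 2] by simp
    qed
  qed
  have all: "l = i \<or> l = j \<or> l = k" for l :: 3
    using exhaust_3[of i] exhaust_3[of j] exhaust_3[of k] exhaust_3[of l] ij by auto
  have UNIV3: "(UNIV :: 3 set) = {i, j, k}" using all by auto
  define L where "L = {x. f x = 0}"
  have LK: "L = K i \<inter> K j"
  proof
    show "L \<subseteq> K i \<inter> K j" unfolding L_def K_def by auto
    show "K i \<inter> K j \<subseteq> L"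
    proof
      fix x assume x: "x \<in> K i \<inter> K j"
      have "(\<Sum>l\<in>UNIV. y $ l * f x $ l) = 0" using qz[of x] unfolding quad_form_def f_def .
      moreover have "(\<Sum>l\<in>UNIV. y $ l * f x $ l) = y $ i * f x $ i + y $ j * f x $ j + y $ k * f x $ k"
        unfolding UNIV3 using ij by (simp add: add.assoc)
      ultimately have "y $ k * f x $ k = 0" using x unfolding K_def by simp
      then have "f x $ k = 0" using yk by simp
      then have "f x $ l = 0" for l using x all[of l] unfolding K_def by auto
      then have "f x = 0" by (simp add: vec_eq_iff)
      then show "x \<in> L" unfolding L_def by simp
    qed
  qed
  show ?thesis
  proof (intro exI conjI ballI)
    show "vec.subspace L" unfolding LK by (intro vec.subspace_inter Ksub)
    show "CARD('n) \<le> vec.dim L + 2" unfolding LK by (rule dimKK)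
    fix x assume x: "x \<in> L"
    then have Mx: "pencil A x *v y = 0" unfolding L_def f_def by simp
    show e: "symmetroid_eq A x = 0" unfolding symmetroid_eq_def using detker[OF Mx y0] .
    have "symmetroid_dir_deriv A x v = 0" for v
      unfolding symmetroid_dir_deriv_def
      by (rule keyM[OF Mx y0 sym_pencil[OF assms(4)] sym_pencil[OF assms(4)] qz])
    then show "symmetroid_singular_at A x"
      unfolding symmetroid_singular_at_def using e by blast
  qed
qed

end
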